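(* On the sphere $S^2=\{\underline r\in\mathbb{R}^3:\langle\underline r,\underline r\rangle=1\}$, for $\underline v\in\mathbb{R}^3$ define the vector fields $X[\underline v](\underline r)=\underline v-\underline r\,\langle \underline v,\underline r\rangle$ and $Y[\underline v](\underline r)=\underline v\times\underline r$, and let $X_i=X[\underline e_i]$, $Y_i=Y[\underline e_i]$ for the standard basis $\underline e_1,\underline e_2,\underline e_3$ of $\mathbb{R}^3$. Let $$\psi=\sum_{i,j=1}^3\Big(Y[\underline e_i\times\underline e_j]\otimes Y_j-X_j\otimes X[\underline e_i\times\underline e_j]\Big)\otimes Y_i\ \in\ \mathrm{diff}(S^2)\otimes_{\mathbb{R}}\mathrm{diff}(S^2)\otimes_{\mathbb{R}}\mathrm{diff}(S^2),$$ and let $\pi$ be the natural map from $\mathrm{diff}(S^2)^{\otimes_{\mathbb{R}}3}$ to the triple tensor product $\mathrm{diff}(S^2)\otimes_{C^\infty(S^2)}\mathrm{diff}(S^2)\otimes_{C^\infty(S^2)}\mathrm{diff}(S^2)$ of the module of vector fields over $C^\infty(S^2)$. Then $\pi\psi=0$.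
   Context: $\langle\ ,\ \rangle$ is the standard inner product and $\times$ the vector cross product on $\mathbb{R}^3$; $\mathrm{diff}(S^2)$ denotes the Lie algebra of smooth vector fields on $S^2$. *)

theory Defs
  imports "HOL-Analysis.Analysis"
begin

definition S2 :: "(real^3) set" where
  "S2 = {r. r \<bullet> r = 1}"

fun Ck :: "nat \<Rightarrow> (real^3) set \<Rightarrow> (real^3 \<Rightarrow> real) \<Rightarrow> bool" where
  "Ck 0 U f = continuous_on U f"
| "Ck (Suc k) U f = ((\<forall>x\<in>U. f differentiable (at x)) \<and>
      (\<forall>i::3. Ck k U (\<lambda>x. frechet_derivative f (at x) (axis i 1))))"

definition smooth_on_open :: "(real^3) set \<Rightarrow> (real^3 \<Rightarrow> real) \<Rightarrow> bool" where
  "smooth_on_open U f = (\<forall>k. Ck k U f)"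

text \<open>C^infinity(S^2): functions on S^2 extending to a smooth function on an open neighbourhood;
  represented canonically as functions on R^3 vanishing off S^2.\<close>
definition smooth_S2 :: "(real^3 \<Rightarrow> real) \<Rightarrow> bool" where
  "smooth_S2 f = ((\<exists>g U. open U \<and> S2 \<subseteq> U \<and> smooth_on_open U g \<and> (\<forall>r\<in>S2. f r = g r))
                  \<and> (\<forall>r. r \<notin> S2 \<longrightarrow> f r = 0))"

text \<open>diff(S^2): smooth tangent vector fields on S^2, as maps into R^3 vanishing off S^2.\<close>
definition vf_S2 :: "(real^3 \<Rightarrow> real^3) \<Rightarrow> bool" where
  "vf_S2 V = ((\<forall>i. smooth_S2 (\<lambda>r. V r $ i)) \<and> (\<forall>r\<in>S2. V r \<bullet> r = 0))"

type_synonym vfield = "real^3 \<Rightarrow> real^3"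

definition fmul :: "(real^3 \<Rightarrow> real) \<Rightarrow> vfield \<Rightarrow> vfield" where
  "fmul f V = (\<lambda>r. f r *\<^sub>R V r)"

definition vadd :: "vfield \<Rightarrow> vfield \<Rightarrow> vfield" where
  "vadd V W = (\<lambda>r. V r + W r)"

definition vscale :: "real \<Rightarrow> vfield \<Rightarrow> vfield" where
  "vscale c V = (\<lambda>r. c *\<^sub>R V r)"

text \<open>Formal real linear combinations of triples (free real vector space on diff^3).\<close>
type_synonym formal = "vfield \<times> vfield \<times> vfield \<Rightarrow> real"

definition delta :: "vfield \<times> vfield \<times> vfield \<Rightarrow> formal" where
  "delta t = (\<lambda>s. if s = t then 1 else 0)"

definition fadd :: "formal \<Rightarrow> formal \<Rightarrow> formal" where
  "fadd a b = (\<lambda>s. a s + b s)"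

definition fsub :: "formal \<Rightarrow> formal \<Rightarrow> formal" where
  "fsub a b = (\<lambda>s. a s - b s)"

definition fscale :: "real \<Rightarrow> formal \<Rightarrow> formal" where
  "fscale c a = (\<lambda>s. c * a s)"

text \<open>Defining relations of diff \<otimes>_{C^inf(S^2)} diff \<otimes>_{C^inf(S^2)} diff:
  real multilinearity in each slot and C^inf(S^2)-balancing between slots.\<close>
inductive_set tensor_rels :: "formal set" where
  add1: "\<lbrakk>vf_S2 X; vf_S2 X'; vf_S2 Y; vf_S2 Z\<rbrakk> \<Longrightarrow>
     fsub (delta (vadd X X', Y, Z)) (fadd (delta (X, Y, Z)) (delta (X', Y, Z))) \<in> tensor_rels"
| add2: "\<lbrakk>vf_S2 X; vf_S2 Y; vf_S2 Y'; vf_S2 Z\<rbrakk> \<Longrightarrow>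
     fsub (delta (X, vadd Y Y', Z)) (fadd (delta (X, Y, Z)) (delta (X, Y', Z))) \<in> tensor_rels"
| add3: "\<lbrakk>vf_S2 X; vf_S2 Y; vf_S2 Z; vf_S2 Z'\<rbrakk> \<Longrightarrow>
     fsub (delta (X, Y, vadd Z Z')) (fadd (delta (X, Y, Z)) (delta (X, Y, Z'))) \<in> tensor_rels"
| scal1: "\<lbrakk>vf_S2 X; vf_S2 Y; vf_S2 Z\<rbrakk> \<Longrightarrow>
     fsub (delta (vscale c X, Y, Z)) (fscale c (delta (X, Y, Z))) \<in> tensor_rels"
| scal2: "\<lbrakk>vf_S2 X; vf_S2 Y; vf_S2 Z\<rbrakk> \<Longrightarrow>
     fsub (delta (X, vscale c Y, Z)) (fscale c (delta (X, Y, Z))) \<in> tensor_rels"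
| scal3: "\<lbrakk>vf_S2 X; vf_S2 Y; vf_S2 Z\<rbrakk> \<Longrightarrow>
     fsub (delta (X, Y, vscale c Z)) (fscale c (delta (X, Y, Z))) \<in> tensor_rels"
| bal12: "\<lbrakk>smooth_S2 f; vf_S2 X; vf_S2 Y; vf_S2 Z\<rbrakk> \<Longrightarrow>
     fsub (delta (fmul f X, Y, Z)) (delta (X, fmul f Y, Z)) \<in> tensor_rels"
| bal23: "\<lbrakk>smooth_S2 f; vf_S2 X; vf_S2 Y; vf_S2 Z\<rbrakk> \<Longrightarrow>
     fsub (delta (X, fmul f Y, Z)) (delta (X, Y, fmul f Z)) \<in> tensor_rels"

text \<open>Real span of the relations = kernel of the quotient map from the free real vector
  space on diff^3 onto diff \<otimes>_{C^inf} diff \<otimes>_{C^inf} diff.\<close>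
inductive_set rel_span :: "formal set" where
  zero: "(\<lambda>_. 0) \<in> rel_span"
| rel: "a \<in> tensor_rels \<Longrightarrow> a \<in> rel_span"
| add: "\<lbrakk>a \<in> rel_span; b \<in> rel_span\<rbrakk> \<Longrightarrow> fadd a b \<in> rel_span"
| scale: "a \<in> rel_span \<Longrightarrow> fscale c a \<in> rel_span"

definition Xf :: "real^3 \<Rightarrow> vfield" where
  "Xf v = (\<lambda>r. if r \<in> S2 then v - (v \<bullet> r) *\<^sub>R r else 0)"

definition Yf :: "real^3 \<Rightarrow> vfield" where
  "Yf v = (\<lambda>r. if r \<in> S2 then cross3 v r else 0)"

abbreviation e :: "3 \<Rightarrow> real^3" where
  "e i \<equiv> axis i 1"

text \<open>A representative of psi in the free real vector space on diff^3
  (any representative of the element of diff^{\<otimes>_R 3} works, since the real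
  multilinearity relations are in rel_span).\<close>
definition psi :: formal where
  "psi = (\<lambda>s. \<Sum>i\<in>(UNIV::3 set). \<Sum>j\<in>(UNIV::3 set).
      delta (Yf (cross3 (e i) (e j)), Yf (e j), Yf (e i)) s - delta (Xf (e j), Xf (cross3 (e i) (e j)), Yf (e i)) s)"

end

theory Submission
  imports Defs
begin

inductive poly3 :: "(real^3 \<Rightarrow> real) \<Rightarrow> bool" where
  pc: "poly3 (\<lambda>x. c)"
| px: "poly3 (\<lambda>x. x $ i)"
| pa: "poly3 f \<Longrightarrow> poly3 g \<Longrightarrow> poly3 (\<lambda>x. f x + g x)"
| pm: "poly3 f \<Longrightarrow> poly3 g \<Longrightarrow> poly3 (\<lambda>x. f x * g x)"

lemma poly3_deriv:
  "poly3 p \<Longrightarrow> \<exists>D. (\<forall>x. (p has_derivative D x) (at x)) \<and> (\<forall>v. poly3 (\<lambda>x. D x v))"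
proof (induction rule: poly3.induct)
  case (pc c)
  show ?case by (rule exI[of _ "\<lambda>x h. 0"]) (auto intro: poly3.pc)
next
  case (px i)
  show ?case
    by (rule exI[of _ "\<lambda>x h. h $ i"]) (auto intro: poly3.pc bounded_linear_imp_has_derivative)
next
  case (pa f g)
  then obtain D1 D2 where "\<forall>x. (f has_derivative D1 x) (at x)" "\<forall>v. poly3 (\<lambda>x. D1 x v)"
     "\<forall>x. (g has_derivative D2 x) (at x)" "\<forall>v. poly3 (\<lambda>x. D2 x v)" by blast
  then show ?case
    by (intro exI[of _ "\<lambda>x h. D1 x h + D2 x h"]) (auto intro: poly3.pa has_derivative_add)
next
  case (pm f g)
  then obtain D1 D2 where "\<forall>x. (f has_derivative D1 x) (at x)" "\<forall>v. poly3 (\<lambda>x. D1 x v)"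
     "\<forall>x. (g has_derivative D2 x) (at x)" "\<forall>v. poly3 (\<lambda>x. D2 x v)" by blast
  then show ?case
    by (intro exI[of _ "\<lambda>x h. f x * D2 x h + D1 x h * g x"])
       (auto intro!: poly3.pa poly3.pm has_derivative_mult pm.hyps)
qed

lemma poly3_Ck: "poly3 p \<Longrightarrow> Ck k UNIV p"
proof (induction k arbitrary: p)
  case 0
  then obtain D where "\<forall>x. (p has_derivative D x) (at x)" using poly3_deriv by blast
  then show ?case
    by (auto intro!: differentiable_imp_continuous_on simp: differentiable_on_def differentiable_def) blast
next
  case (Suc k)
  then obtain D where D: "\<forall>x. (p has_derivative D x) (at x)" "\<forall>v. poly3 (\<lambda>x. D x v)"
    using poly3_deriv by blast
  have "(\<lambda>x. frechet_derivative p (at x) v) = (\<lambda>x. D x v)" for v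
    using D(1) frechet_derivative_at by metis
  with D Suc.IH show ?case by (auto simp: differentiable_def)
qed

lemma poly3_smooth: "poly3 p \<Longrightarrow> smooth_S2 (\<lambda>r. if r \<in> S2 then p r else 0)"
  unfolding smooth_S2_def smooth_on_open_def
  by (auto intro!: exI[of _ p] exI[of _ UNIV] poly3_Ck)

lemma poly3_sum: "finite A \<Longrightarrow> (\<forall>a\<in>A. poly3 (f a)) \<Longrightarrow> poly3 (\<lambda>x. \<Sum>a\<in>A. f a x)"
proof (induction A rule: finite_induct)
  case empty then show ?case using pc[of 0] by simp
next
  case (insert a F) then show ?case by (simp add: pa)
qed

lemma poly3_diff: "poly3 f \<Longrightarrow> poly3 g \<Longrightarrow> poly3 (\<lambda>x. f x - g x)"
proof -
  assume "poly3 f" "poly3 g"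
  then have "poly3 (\<lambda>x. f x + (\<lambda>x. -1) x * g x)" by (intro pa pm pc)
  then show ?thesis by simp
qed

lemma poly3_neg: "poly3 f \<Longrightarrow> poly3 (\<lambda>x. - f x)"
  using poly3_diff[OF pc[of 0]] by simp

definition vpoly :: "(real^3 \<Rightarrow> real^3) \<Rightarrow> bool" where
  "vpoly q = (\<forall>i. poly3 (\<lambda>x. q x $ i))"

lemma vpoly_const: "vpoly (\<lambda>x. v)" by (simp add: vpoly_def pc)
lemma vpoly_id: "vpoly (\<lambda>x. x)" by (simp add: vpoly_def px)
lemma vpoly_add: "vpoly p \<Longrightarrow> vpoly q \<Longrightarrow> vpoly (\<lambda>x. p x + q x)" by (simp add: vpoly_def pa)
lemma vpoly_diff: "vpoly p \<Longrightarrow> vpoly q \<Longrightarrow> vpoly (\<lambda>x. p x - q x)" by (simp add: vpoly_def poly3_diff)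
lemma vpoly_neg: "vpoly p \<Longrightarrow> vpoly (\<lambda>x. - p x)" by (simp add: vpoly_def poly3_neg)
lemma vpoly_scale: "poly3 f \<Longrightarrow> vpoly q \<Longrightarrow> vpoly (\<lambda>x. f x *\<^sub>R q x)" by (simp add: vpoly_def pm)
lemma vpoly_sum: "finite A \<Longrightarrow> (\<forall>a\<in>A. vpoly (f a)) \<Longrightarrow> vpoly (\<lambda>x. \<Sum>a\<in>A. f a x)"
  by (simp add: vpoly_def sum_component poly3_sum)
lemma poly3_comp: "vpoly q \<Longrightarrow> poly3 (\<lambda>x. q x $ i)" by (simp add: vpoly_def)
lemma poly3_inner: "vpoly p \<Longrightarrow> vpoly q \<Longrightarrow> poly3 (\<lambda>x. p x \<bullet> q x)"
  unfolding inner_vec_def by (intro poly3_sum) (auto simp: vpoly_def intro!: pm)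
lemma vpoly_cross: "vpoly p \<Longrightarrow> vpoly q \<Longrightarrow> vpoly (\<lambda>x. cross3 (p x) (q x))"
  unfolding vpoly_def
proof
  fix i :: 3
  assume a: "\<forall>i. poly3 (\<lambda>x. p x $ i)" "\<forall>i. poly3 (\<lambda>x. q x $ i)"
  have "i = 1 \<or> i = 2 \<or> i = 3" by (rule exhaust_3)
  then show "poly3 (\<lambda>x. cross3 (p x) (q x) $ i)"
    by (elim disjE) (simp_all add: cross_components a poly3_diff pm)
qed

definition tv :: "(real^3 \<Rightarrow> real^3) \<Rightarrow> bool" where
  "tv q = (vpoly q \<and> (\<forall>r\<in>S2. q r \<bullet> r = 0))"

definition RV :: "(real^3 \<Rightarrow> real^3) \<Rightarrow> vfield" where
  "RV q = (\<lambda>r. if r \<in> S2 then q r else 0)"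

lemma vf_RV: "tv q \<Longrightarrow> vf_S2 (RV q)"
proof -
  assume "tv q"
  then have v: "vpoly q" and t: "\<forall>r\<in>S2. q r \<bullet> r = 0" by (auto simp: tv_def)
  have "smooth_S2 (\<lambda>r. RV q r $ i)" for i
  proof -
    have "(\<lambda>r. RV q r $ i) = (\<lambda>r. if r \<in> S2 then q r $ i else 0)" by (auto simp: RV_def)
    then show ?thesis using poly3_smooth[OF poly3_comp[OF v]] by simp
  qed
  then show ?thesis using t by (auto simp: vf_S2_def RV_def)
qed

lemma tv_zero: "tv (\<lambda>r. 0)" by (simp add: tv_def vpoly_const)
lemma tv_add: "tv p \<Longrightarrow> tv q \<Longrightarrow> tv (\<lambda>x. p x + q x)" by (simp add: tv_def vpoly_add inner_add_left)
lemma tv_neg: "tv p \<Longrightarrow> tv (\<lambda>x. - p x)" by (simp add: tv_def vpoly_neg)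
lemma tv_scale: "poly3 f \<Longrightarrow> tv q \<Longrightarrow> tv (\<lambda>x. f x *\<^sub>R q x)" by (simp add: tv_def vpoly_scale)
lemma tv_sum: "finite A \<Longrightarrow> (\<forall>a\<in>A. tv (f a)) \<Longrightarrow> tv (\<lambda>x. \<Sum>a\<in>A. f a x)"
  by (simp add: tv_def vpoly_sum inner_sum_left)

lemma RV_zero: "RV (\<lambda>r. 0) = (\<lambda>r. 0)" by (simp add: RV_def)

lemma rs_add: "a \<in> rel_span \<Longrightarrow> b \<in> rel_span \<Longrightarrow> (\<lambda>s. a s + b s) \<in> rel_span"
  using rel_span.add[of a b] by (simp add: fadd_def)
lemma rs_scale: "a \<in> rel_span \<Longrightarrow> (\<lambda>s. c * a s) \<in> rel_span"
  using rel_span.scale[of a c] by (simp add: fscale_def)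
lemma rs_diff: "a \<in> rel_span \<Longrightarrow> b \<in> rel_span \<Longrightarrow> (\<lambda>s. a s - b s) \<in> rel_span"
  using rs_add[OF _ rs_scale[of b "-1"], of a] by simp
lemma rs_zero: "(\<lambda>s. 0) \<in> rel_span" using rel_span.zero .
lemma rs_sum: "finite A \<Longrightarrow> (\<forall>x\<in>A. f x \<in> rel_span) \<Longrightarrow> (\<lambda>s. \<Sum>x\<in>A. f x s) \<in> rel_span"
proof (induction A rule: finite_induct)
  case empty then show ?case using rs_zero by simp
next
  case (insert a F) then show ?case using rs_add[of "f a" "\<lambda>s. \<Sum>x\<in>F. f x s"] by simp
qed

definition eqv :: "formal \<Rightarrow> formal \<Rightarrow> bool" where
  "eqv a b = ((\<lambda>s. a s - b s) \<in> rel_span)"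

lemma eqv_refl: "eqv a a" by (simp add: eqv_def rs_zero)
lemma eqv_sym: "eqv a b \<Longrightarrow> eqv b a"
  unfolding eqv_def using rs_scale[of "\<lambda>s. a s - b s" "-1"] by (simp add: algebra_simps)
lemma eqv_trans [trans]: "eqv a b \<Longrightarrow> eqv b c \<Longrightarrow> eqv a c"
  unfolding eqv_def using rs_add[of "\<lambda>s. a s - b s" "\<lambda>s. b s - c s"] by simp
lemma eqv_add: "eqv a a' \<Longrightarrow> eqv b b' \<Longrightarrow> eqv (\<lambda>s. a s + b s) (\<lambda>s. a' s + b' s)"
  unfolding eqv_def using rs_add[of "\<lambda>s. a s - a' s" "\<lambda>s. b s - b' s"] by (simp add: algebra_simps)
lemma eqv_diff: "eqv a a' \<Longrightarrow> eqv b b' \<Longrightarrow> eqv (\<lambda>s. a s - b s) (\<lambda>s. a' s - b' s)"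
  unfolding eqv_def using rs_diff[of "\<lambda>s. a s - a' s" "\<lambda>s. b s - b' s"] by (simp add: algebra_simps)
lemma eqv_sum: "finite A \<Longrightarrow> (\<forall>x\<in>A. eqv (f x) (g x)) \<Longrightarrow> eqv (\<lambda>s. \<Sum>x\<in>A. f x s) (\<lambda>s. \<Sum>x\<in>A. g x s)"
  unfolding eqv_def using rs_sum[of A "\<lambda>x s. f x s - g x s"] by (simp add: sum_subtractf)
lemma eqv_zero: "eqv a (\<lambda>s. 0) \<longleftrightarrow> a \<in> rel_span" by (simp add: eqv_def)
lemma eqv_rs: "eqv a b \<Longrightarrow> b \<in> rel_span \<Longrightarrow> a \<in> rel_span"
  unfolding eqv_def using rs_add[of "\<lambda>s. a s - b s" b] by simp

lemma vf_zero: "vf_S2 (\<lambda>r. 0)" using vf_RV[OF tv_zero] by (simp add: RV_zero)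

lemma T_add1: "vf_S2 X \<Longrightarrow> vf_S2 X' \<Longrightarrow> vf_S2 Y \<Longrightarrow> vf_S2 Z \<Longrightarrow>
  eqv (delta (vadd X X', Y, Z)) (\<lambda>s. delta (X,Y,Z) s + delta (X',Y,Z) s)"
  using rel_span.rel[OF tensor_rels.add1[of X X' Y Z]] by (simp add: eqv_def fsub_def fadd_def)
lemma T_add2: "vf_S2 X \<Longrightarrow> vf_S2 Y \<Longrightarrow> vf_S2 Y' \<Longrightarrow> vf_S2 Z \<Longrightarrow>
  eqv (delta (X, vadd Y Y', Z)) (\<lambda>s. delta (X,Y,Z) s + delta (X,Y',Z) s)"
  using rel_span.rel[OF tensor_rels.add2[of X Y Y' Z]] by (simp add: eqv_def fsub_def fadd_def)
lemma T_add3: "vf_S2 X \<Longrightarrow> vf_S2 Y \<Longrightarrow> vf_S2 Z \<Longrightarrow> vf_S2 Z' \<Longrightarrow>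
  eqv (delta (X, Y, vadd Z Z')) (\<lambda>s. delta (X,Y,Z) s + delta (X,Y,Z') s)"
  using rel_span.rel[OF tensor_rels.add3[of X Y Z Z']] by (simp add: eqv_def fsub_def fadd_def)

lemma T_zero1: "vf_S2 Y \<Longrightarrow> vf_S2 Z \<Longrightarrow> delta (\<lambda>r. 0, Y, Z) \<in> rel_span"
  using rel_span.rel[OF tensor_rels.scal1[of "\<lambda>r. 0" Y Z 0]] vf_zero
  by (simp add: fsub_def fscale_def vscale_def)
lemma T_zero2: "vf_S2 X \<Longrightarrow> vf_S2 Z \<Longrightarrow> delta (X, \<lambda>r. 0, Z) \<in> rel_span"
  using rel_span.rel[OF tensor_rels.scal2[of X "\<lambda>r. 0" Z 0]] vf_zero
  by (simp add: fsub_def fscale_def vscale_def)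
lemma T_zero3: "vf_S2 X \<Longrightarrow> vf_S2 Y \<Longrightarrow> delta (X, Y, \<lambda>r. 0) \<in> rel_span"
  using rel_span.rel[OF tensor_rels.scal3[of X Y "\<lambda>r. 0" 0]] vf_zero
  by (simp add: fsub_def fscale_def vscale_def)

lemma T_neg3: "vf_S2 X \<Longrightarrow> vf_S2 Y \<Longrightarrow> tv q \<Longrightarrow>
  eqv (delta (X, Y, RV (\<lambda>r. - q r))) (\<lambda>s. - delta (X, Y, RV q) s)"
proof -
  assume a: "vf_S2 X" "vf_S2 Y" "tv q"
  have "vscale (-1) (RV q) = RV (\<lambda>r. - q r)" by (auto simp: vscale_def RV_def)
  then show ?thesis
    using rel_span.rel[OF tensor_rels.scal3[of X Y "RV q" "-1"]] a vf_RV
    by (simp add: fsub_def fscale_def eqv_def)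
qed

lemma fmul_RV: "fmul (\<lambda>r. if r \<in> S2 then f r else 0) (RV u) = RV (\<lambda>r. f r *\<^sub>R u r)"
  by (auto simp: fmul_def RV_def)

lemma T_bal12: "poly3 f \<Longrightarrow> tv u \<Longrightarrow> tv y \<Longrightarrow> vf_S2 Z \<Longrightarrow>
  eqv (delta (RV (\<lambda>r. f r *\<^sub>R u r), RV y, Z)) (delta (RV u, RV (\<lambda>r. f r *\<^sub>R y r), Z))"
  using rel_span.rel[OF tensor_rels.bal12[OF poly3_smooth, of f "RV u" "RV y" Z]] vf_RV
  by (simp add: fsub_def eqv_def fmul_RV)
lemma T_bal23: "poly3 f \<Longrightarrow> vf_S2 X \<Longrightarrow> tv y \<Longrightarrow> tv z \<Longrightarrow>
  eqv (delta (X, RV (\<lambda>r. f r *\<^sub>R y r), RV z)) (delta (X, RV y, RV (\<lambda>r. f r *\<^sub>R z r)))"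
  using rel_span.rel[OF tensor_rels.bal23[OF poly3_smooth, of f X "RV y" "RV z"]] vf_RV
  by (simp add: fsub_def eqv_def fmul_RV)

lemma RV_add: "RV (\<lambda>r. p r + q r) = vadd (RV p) (RV q)" by (auto simp: RV_def vadd_def)

lemma slot1_sum: "finite A \<Longrightarrow> \<forall>a\<in>A. tv (w a) \<Longrightarrow> vf_S2 Y \<Longrightarrow> vf_S2 Z \<Longrightarrow>
  eqv (delta (RV (\<lambda>r. \<Sum>a\<in>A. w a r), Y, Z)) (\<lambda>s. \<Sum>a\<in>A. delta (RV (w a), Y, Z) s)"
proof (induction A rule: finite_induct)
  case empty then show ?case using T_zero1 by (simp add: RV_zero eqv_def)
next
  case (insert x F)
  have "eqv (delta (RV (\<lambda>r. \<Sum>a\<in>insert x F. w a r), Y, Z))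
     (\<lambda>s. delta (RV (w x), Y, Z) s + delta (RV (\<lambda>r. \<Sum>a\<in>F. w a r), Y, Z) s)"
  proof -
    have "vf_S2 (RV (w x))" "vf_S2 (RV (\<lambda>r. \<Sum>a\<in>F. w a r))"
      using insert vf_RV tv_sum by auto
    then show ?thesis using insert T_add1[of "RV (w x)" "RV (\<lambda>r. \<Sum>a\<in>F. w a r)" Y Z]
      by (simp add: RV_add)
  qed
  also have "eqv \<dots> (\<lambda>s. delta (RV (w x), Y, Z) s + (\<Sum>a\<in>F. delta (RV (w a), Y, Z) s))"
    using insert by (intro eqv_add eqv_refl) auto
  finally show ?case using insert by simp
qed

lemma slot2_sum: "finite A \<Longrightarrow> \<forall>a\<in>A. tv (w a) \<Longrightarrow> vf_S2 X \<Longrightarrow> vf_S2 Z \<Longrightarrow>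
  eqv (delta (X, RV (\<lambda>r. \<Sum>a\<in>A. w a r), Z)) (\<lambda>s. \<Sum>a\<in>A. delta (X, RV (w a), Z) s)"
proof (induction A rule: finite_induct)
  case empty then show ?case using T_zero2 by (simp add: RV_zero eqv_def)
next
  case (insert x F)
  have "eqv (delta (X, RV (\<lambda>r. \<Sum>a\<in>insert x F. w a r), Z))
     (\<lambda>s. delta (X, RV (w x), Z) s + delta (X, RV (\<lambda>r. \<Sum>a\<in>F. w a r), Z) s)"
  proof -
    have "vf_S2 (RV (w x))" "vf_S2 (RV (\<lambda>r. \<Sum>a\<in>F. w a r))"
      using insert vf_RV tv_sum by auto
    then show ?thesis using insert T_add2[of X "RV (w x)" "RV (\<lambda>r. \<Sum>a\<in>F. w a r)" Z]
      by (simp add: RV_add)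
  qed
  also have "eqv \<dots> (\<lambda>s. delta (X, RV (w x), Z) s + (\<Sum>a\<in>F. delta (X, RV (w a), Z) s))"
    using insert by (intro eqv_add eqv_refl) auto
  finally show ?case using insert by simp
qed

lemma slot3_sum: "finite A \<Longrightarrow> \<forall>a\<in>A. tv (w a) \<Longrightarrow> vf_S2 X \<Longrightarrow> vf_S2 Y \<Longrightarrow>
  eqv (delta (X, Y, RV (\<lambda>r. \<Sum>a\<in>A. w a r))) (\<lambda>s. \<Sum>a\<in>A. delta (X, Y, RV (w a)) s)"
proof (induction A rule: finite_induct)
  case empty then show ?case using T_zero3 by (simp add: RV_zero eqv_def)
next
  case (insert x F)
  have "eqv (delta (X, Y, RV (\<lambda>r. \<Sum>a\<in>insert x F. w a r)))
     (\<lambda>s. delta (X, Y, RV (w x)) s + delta (X, Y, RV (\<lambda>r. \<Sum>a\<in>F. w a r)) s)"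
  proof -
    have "vf_S2 (RV (w x))" "vf_S2 (RV (\<lambda>r. \<Sum>a\<in>F. w a r))"
      using insert vf_RV tv_sum by auto
    then show ?thesis using insert T_add3[of X Y "RV (w x)" "RV (\<lambda>r. \<Sum>a\<in>F. w a r)"]
      by (simp add: RV_add)
  qed
  also have "eqv \<dots> (\<lambda>s. delta (X, Y, RV (w x)) s + (\<Sum>a\<in>F. delta (X, Y, RV (w a)) s))"
    using insert by (intro eqv_add eqv_refl) auto
  finally show ?case using insert by simp
qed

lemma RV_cong: "(\<And>r. r \<in> S2 \<Longrightarrow> p r = q r) \<Longrightarrow> RV p = RV q"
  by (auto simp: RV_def)

definition xx :: "3 \<Rightarrow> real^3 \<Rightarrow> real^3" where
  "xx a = (\<lambda>r. e a - (e a \<bullet> r) *\<^sub>R r)"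

lemma S2_norm: "r \<in> S2 \<Longrightarrow> r \<bullet> r = 1" by (simp add: S2_def)

lemma tv_X: "tv (\<lambda>r. v - (v \<bullet> r) *\<^sub>R r)"
  unfolding tv_def
  by (auto simp: S2_norm inner_diff_left intro!: vpoly_diff vpoly_scale vpoly_const poly3_inner vpoly_id)

lemma tv_Y: "tv (\<lambda>r. cross3 v r)"
  unfolding tv_def by (auto simp: dot_cross_self intro!: vpoly_cross vpoly_const vpoly_id)

lemma tv_xx: "tv (xx a)" using tv_X by (simp add: xx_def)

lemma decomp: "tv q \<Longrightarrow> r \<in> S2 \<Longrightarrow> (\<Sum>a\<in>UNIV. (q r $ a) *\<^sub>R xx a r) = q r"
proof -
  assume "tv q" "r \<in> S2"
  then have t: "q r \<bullet> r = 0" by (simp add: tv_def)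
  then have h: "r$k * (r$1 * q r$1 + r$2 * q r$2 + r$3 * q r$3) = 0" for k
    by (simp add: inner_vec_def sum_3 algebra_simps)
  show ?thesis
    using h[of 1] h[of 2] h[of 3]
    by (simp add: xx_def vec_eq_iff forall_3 sum_3 axis_def inner_vec_def algebra_simps)
qed

lemma decomp_r: "r \<in> S2 \<Longrightarrow> (\<Sum>a\<in>UNIV. (r $ a) *\<^sub>R xx a r) = 0"
proof -
  assume "r \<in> S2"
  then have t: "r \<bullet> r = 1" by (simp add: S2_def)
  then have h: "r$k * (r$1 * r$1 + r$2 * r$2 + r$3 * r$3) = r$k" for k
    by (simp add: inner_vec_def sum_3 algebra_simps)
  show ?thesis
    using h[of 1] h[of 2] h[of 3]
    by (simp add: xx_def vec_eq_iff forall_3 sum_3 axis_def inner_vec_def algebra_simps)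
qed

lemma poly3_tvc: "tv q \<Longrightarrow> poly3 (\<lambda>r. q r $ a)" by (simp add: tv_def poly3_comp)

lemma expand:
  assumes q1: "tv q1" and q2: "tv q2" and q3: "tv q3"
  shows "eqv (delta (RV q1, RV q2, RV q3))
    (\<lambda>s. \<Sum>a\<in>UNIV. \<Sum>b\<in>UNIV. delta (RV (xx a), RV (xx b), RV (\<lambda>r. (q1 r $ a * q2 r $ b) *\<^sub>R q3 r)) s)"
proof -
  have vx: "vf_S2 (RV (xx a))" for a using vf_RV tv_xx by blast
  have v2: "vf_S2 (RV q2)" and v3: "vf_S2 (RV q3)" using vf_RV q2 q3 by auto
  have e1: "RV q1 = RV (\<lambda>r. \<Sum>a\<in>UNIV. (q1 r $ a) *\<^sub>R xx a r)"
    using decomp[OF q1] by (intro RV_cong) simp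
  have e2: "RV q2 = RV (\<lambda>r. \<Sum>b\<in>UNIV. (q2 r $ b) *\<^sub>R xx b r)"
    using decomp[OF q2] by (intro RV_cong) simp
  have "eqv (delta (RV q1, RV q2, RV q3))
     (\<lambda>s. \<Sum>a\<in>UNIV. delta (RV (\<lambda>r. (q1 r $ a) *\<^sub>R xx a r), RV q2, RV q3) s)"
    unfolding e1 by (rule slot1_sum) (auto intro!: tv_scale poly3_tvc q1 tv_xx v2 v3)
  also have "eqv \<dots> (\<lambda>s. \<Sum>a\<in>UNIV. \<Sum>b\<in>UNIV. delta (RV (xx a), RV (xx b), RV (\<lambda>r. (q1 r $ a * q2 r $ b) *\<^sub>R q3 r)) s)"
  proof (rule eqv_sum, simp, rule ballI)
    fix a :: 3
    have "eqv (delta (RV (\<lambda>r. (q1 r $ a) *\<^sub>R xx a r), RV q2, RV q3))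
               (delta (RV (xx a), RV (\<lambda>r. (q1 r $ a) *\<^sub>R q2 r), RV q3))"
      by (rule T_bal12) (auto intro: poly3_tvc q1 q2 tv_xx v3)
    also have "eqv \<dots> (delta (RV (xx a), RV q2, RV (\<lambda>r. (q1 r $ a) *\<^sub>R q3 r)))"
      by (rule T_bal23) (auto intro: poly3_tvc q1 q2 q3 vx)
    also have "eqv \<dots> (\<lambda>s. \<Sum>b\<in>UNIV. delta (RV (xx a), RV (\<lambda>r. (q2 r $ b) *\<^sub>R xx b r), RV (\<lambda>r. (q1 r $ a) *\<^sub>R q3 r)) s)"
      apply (subst (1) e2)
      by (rule slot2_sum) (auto intro!: tv_scale poly3_tvc q2 q3 tv_xx vx vf_RV simp: q1)
    also have "eqv \<dots> (\<lambda>s. \<Sum>b\<in>UNIV. delta (RV (xx a), RV (xx b), RV (\<lambda>r. (q2 r $ b) *\<^sub>R ((q1 r $ a) *\<^sub>R q3 r))) s)"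
      by (rule eqv_sum, simp, rule ballI, rule T_bal23)
         (auto intro!: tv_scale poly3_tvc q1 q2 q3 tv_xx vx)
    also have "(\<lambda>s. \<Sum>b\<in>UNIV. delta (RV (xx a), RV (xx b), RV (\<lambda>r. (q2 r $ b) *\<^sub>R ((q1 r $ a) *\<^sub>R q3 r))) s)
       = (\<lambda>s. \<Sum>b\<in>UNIV. delta (RV (xx a), RV (xx b), RV (\<lambda>r. (q1 r $ a * q2 r $ b) *\<^sub>R q3 r)) s)"
      by (simp add: mult.commute)
    finally show "eqv (delta (RV (\<lambda>r. (q1 r $ a) *\<^sub>R xx a r), RV q2, RV q3))
       (\<lambda>s. \<Sum>b\<in>UNIV. delta (RV (xx a), RV (xx b), RV (\<lambda>r. (q1 r $ a * q2 r $ b) *\<^sub>R q3 r)) s)" .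
  qed
  finally show ?thesis .
qed

lemma kernel_ident:
  fixes W :: "3 \<Rightarrow> 3 \<Rightarrow> real^3 \<Rightarrow> real^3"
  shows "W a b r = r$a *\<^sub>R (\<Sum>\<alpha>\<in>UNIV. (r$\<alpha>) *\<^sub>R W \<alpha> b r)
     + (r$b *\<^sub>R (\<Sum>\<alpha>\<in>UNIV. \<Sum>\<beta>\<in>UNIV. (xx \<alpha> r $ a * r$\<beta>) *\<^sub>R W \<alpha> \<beta> r)
     + (\<Sum>\<alpha>\<in>UNIV. \<Sum>\<beta>\<in>UNIV. (xx \<alpha> r $ a * xx \<beta> r $ b) *\<^sub>R W \<alpha> \<beta> r))"
proof -
  have "a = 1 \<or> a = 2 \<or> a = 3" "b = 1 \<or> b = 2 \<or> b = 3" by (rule exhaust_3)+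
  then show ?thesis
    by (elim disjE) (simp_all add: vec_eq_iff forall_3 sum_3 xx_def axis_def inner_vec_def algebra_simps)
qed

lemma poly_r: "poly3 (\<lambda>r. r $ a)" by (rule px)

lemma kernel:
  fixes W :: "3 \<Rightarrow> 3 \<Rightarrow> real^3 \<Rightarrow> real^3"
  assumes W: "\<And>a b. tv (W a b)"
  and H: "\<And>r a b. r \<in> S2 \<Longrightarrow> (\<Sum>\<alpha>\<in>UNIV. \<Sum>\<beta>\<in>UNIV. (xx \<alpha> r $ a * xx \<beta> r $ b) *\<^sub>R W \<alpha> \<beta> r) = 0"
  shows "(\<lambda>s. \<Sum>a\<in>UNIV. \<Sum>b\<in>UNIV. delta (RV (xx a), RV (xx b), RV (W a b)) s) \<in> rel_span"
proof -
  define G where "G b r = (\<Sum>\<alpha>\<in>UNIV. (r$\<alpha>) *\<^sub>R W \<alpha> b r)" for b r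
  define K where "K a r = (\<Sum>\<alpha>\<in>UNIV. \<Sum>\<beta>\<in>UNIV. (xx \<alpha> r $ a * r$\<beta>) *\<^sub>R W \<alpha> \<beta> r)" for a r
  define W3 where "W3 a b r = (\<Sum>\<alpha>\<in>UNIV. \<Sum>\<beta>\<in>UNIV. (xx \<alpha> r $ a * xx \<beta> r $ b) *\<^sub>R W \<alpha> \<beta> r)" for a b r
  have vx: "vf_S2 (RV (xx a))" for a using vf_RV tv_xx by blast
  have tG: "tv (G b)" for b unfolding G_def
    by (rule tv_sum) (auto intro!: tv_scale W px)
  have tK: "tv (K a)" for a unfolding K_def
    by (intro tv_sum ballI) (auto intro!: tv_scale W px pm poly3_tvc tv_xx)
  have tW3: "tv (W3 a b)" for a b unfolding W3_def
    by (intro tv_sum ballI) (auto intro!: tv_scale W px pm poly3_tvc tv_xx)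
  have tG': "tv (\<lambda>r. r$a *\<^sub>R G b r)" for a b by (intro tv_scale px tG)
  have tK': "tv (\<lambda>r. r$b *\<^sub>R K a r)" for a b by (intro tv_scale px tK)
  have RW3: "RV (W3 a b) = (\<lambda>r. 0)" for a b
    using H by (auto simp: RV_def W3_def)
  have split: "RV (W a b) = vadd (RV (\<lambda>r. r$a *\<^sub>R G b r)) (vadd (RV (\<lambda>r. r$b *\<^sub>R K a r)) (RV (W3 a b)))" for a b
  proof -
    have "W a b = (\<lambda>r. r$a *\<^sub>R G b r + (r$b *\<^sub>R K a r + W3 a b r))"
      unfolding G_def K_def W3_def by (rule ext) (rule kernel_ident)
    then show ?thesis by (simp only: RV_add)
  qed
  have S1: "eqv (\<lambda>s. \<Sum>a\<in>UNIV. \<Sum>b\<in>UNIV. delta (RV (xx a), RV (xx b), RV (W a b)) s)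
     (\<lambda>s. \<Sum>a\<in>UNIV. \<Sum>b\<in>UNIV. (delta (RV (xx a), RV (xx b), RV (\<lambda>r. r$a *\<^sub>R G b r)) s
         + (delta (RV (xx a), RV (xx b), RV (\<lambda>r. r$b *\<^sub>R K a r)) s
         + delta (RV (xx a), RV (xx b), RV (W3 a b)) s)))"
  proof (intro eqv_sum ballI, simp, simp)
    fix a b
    have v1: "vf_S2 (RV (\<lambda>r. r$a *\<^sub>R G b r))" "vf_S2 (RV (\<lambda>r. r$b *\<^sub>R K a r))" "vf_S2 (RV (W3 a b))"
      using vf_RV tG' tK' tW3 by blast+
    have v2: "vf_S2 (vadd (RV (\<lambda>r. r$b *\<^sub>R K a r)) (RV (W3 a b)))"
      unfolding RV_add[symmetric] by (intro vf_RV tv_add tK' tW3)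
    have "eqv (delta (RV (xx a), RV (xx b), RV (W a b)))
       (\<lambda>s. delta (RV (xx a), RV (xx b), RV (\<lambda>r. r$a *\<^sub>R G b r)) s
         + delta (RV (xx a), RV (xx b), vadd (RV (\<lambda>r. r$b *\<^sub>R K a r)) (RV (W3 a b))) s)"
      unfolding split by (rule T_add3[OF vx vx v1(1) v2])
    also have "eqv \<dots> (\<lambda>s. delta (RV (xx a), RV (xx b), RV (\<lambda>r. r$a *\<^sub>R G b r)) s
         + (delta (RV (xx a), RV (xx b), RV (\<lambda>r. r$b *\<^sub>R K a r)) s
         + delta (RV (xx a), RV (xx b), RV (W3 a b)) s))"
      by (rule eqv_add[OF eqv_refl T_add3[OF vx vx v1(2) v1(3)]])
    finally show "eqv (delta (RV (xx a), RV (xx b), RV (W a b)))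
       (\<lambda>s. delta (RV (xx a), RV (xx b), RV (\<lambda>r. r$a *\<^sub>R G b r)) s
         + (delta (RV (xx a), RV (xx b), RV (\<lambda>r. r$b *\<^sub>R K a r)) s
         + delta (RV (xx a), RV (xx b), RV (W3 a b)) s))" .
  qed
  have P1: "(\<lambda>s. \<Sum>a\<in>UNIV. \<Sum>b\<in>UNIV. delta (RV (xx a), RV (xx b), RV (\<lambda>r. r$a *\<^sub>R G b r)) s) \<in> rel_span"
  proof -
    have "eqv (\<lambda>s. \<Sum>a\<in>UNIV. \<Sum>b\<in>UNIV. delta (RV (xx a), RV (xx b), RV (\<lambda>r. r$a *\<^sub>R G b r)) s)
              (\<lambda>s. \<Sum>a\<in>UNIV. \<Sum>b\<in>UNIV. delta (RV (\<lambda>r. r$a *\<^sub>R xx a r), RV (xx b), RV (G b)) s)"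
    proof (intro eqv_sum ballI, simp, simp)
      fix a b
      have "eqv (delta (RV (xx a), RV (xx b), RV (\<lambda>r. r$a *\<^sub>R G b r)))
                (delta (RV (xx a), RV (\<lambda>r. r$a *\<^sub>R xx b r), RV (G b)))"
        by (rule eqv_sym, rule T_bal23[OF poly_r vx tv_xx tG])
      also have "eqv \<dots> (delta (RV (\<lambda>r. r$a *\<^sub>R xx a r), RV (xx b), RV (G b)))"
        by (rule eqv_sym, rule T_bal12[OF poly_r tv_xx tv_xx vf_RV[OF tG]])
      finally show "eqv (delta (RV (xx a), RV (xx b), RV (\<lambda>r. r$a *\<^sub>R G b r)))
                (delta (RV (\<lambda>r. r$a *\<^sub>R xx a r), RV (xx b), RV (G b)))" .
    qed
    also have "(\<lambda>s. \<Sum>a\<in>UNIV. \<Sum>b\<in>UNIV. delta (RV (\<lambda>r. r$a *\<^sub>R xx a r), RV (xx b), RV (G b)) s)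
        = (\<lambda>s. \<Sum>b\<in>UNIV. \<Sum>a\<in>UNIV. delta (RV (\<lambda>r. r$a *\<^sub>R xx a r), RV (xx b), RV (G b)) s)"
      by (rule ext, rule sum.swap)
    also have "eqv \<dots> (\<lambda>s. \<Sum>b\<in>UNIV. delta (RV (\<lambda>r. \<Sum>a\<in>UNIV. r$a *\<^sub>R xx a r), RV (xx b), RV (G b)) s)"
      by (intro eqv_sum ballI finite, rule eqv_sym, intro slot1_sum finite ballI tv_scale poly_r tv_xx vx vf_RV tG)
    also have "(\<lambda>s. \<Sum>b\<in>UNIV. delta (RV (\<lambda>r. \<Sum>a\<in>UNIV. r$a *\<^sub>R xx a r), RV (xx b), RV (G b)) s)
         = (\<lambda>s. \<Sum>b\<in>UNIV. delta (\<lambda>r. 0, RV (xx b), RV (G b)) s)"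
    proof -
      have "RV (\<lambda>r. \<Sum>a\<in>UNIV. r$a *\<^sub>R xx a r) = (\<lambda>r. 0)"
        using decomp_r by (auto simp: RV_def)
      then show ?thesis by simp
    qed
    finally show ?thesis
      by (rule eqv_rs) (intro rs_sum ballI T_zero1 finite vx vf_RV tG)
  qed
  have P2: "(\<lambda>s. \<Sum>a\<in>UNIV. \<Sum>b\<in>UNIV. delta (RV (xx a), RV (xx b), RV (\<lambda>r. r$b *\<^sub>R K a r)) s) \<in> rel_span"
  proof -
    have "eqv (\<lambda>s. \<Sum>a\<in>UNIV. \<Sum>b\<in>UNIV. delta (RV (xx a), RV (xx b), RV (\<lambda>r. r$b *\<^sub>R K a r)) s)
              (\<lambda>s. \<Sum>a\<in>UNIV. \<Sum>b\<in>UNIV. delta (RV (xx a), RV (\<lambda>r. r$b *\<^sub>R xx b r), RV (K a)) s)"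
      by (intro eqv_sum ballI finite, rule eqv_sym, rule T_bal23[OF poly_r vx tv_xx tK])
    also have "eqv \<dots> (\<lambda>s. \<Sum>a\<in>UNIV. delta (RV (xx a), RV (\<lambda>r. \<Sum>b\<in>UNIV. r$b *\<^sub>R xx b r), RV (K a)) s)"
      by (intro eqv_sum ballI finite, rule eqv_sym, intro slot2_sum finite ballI tv_scale poly_r tv_xx vx vf_RV tK)
    also have "(\<lambda>s. \<Sum>a\<in>UNIV. delta (RV (xx a), RV (\<lambda>r. \<Sum>b\<in>UNIV. r$b *\<^sub>R xx b r), RV (K a)) s)
         = (\<lambda>s. \<Sum>a\<in>UNIV. delta (RV (xx a), \<lambda>r. 0, RV (K a)) s)"
    proof -
      have "RV (\<lambda>r. \<Sum>a\<in>UNIV. r$a *\<^sub>R xx a r) = (\<lambda>r. 0)"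
        using decomp_r by (auto simp: RV_def)
      then show ?thesis by simp
    qed
    finally show ?thesis
      by (rule eqv_rs) (intro rs_sum ballI T_zero2 finite vx vf_RV tK)
  qed
  have P3: "(\<lambda>s. \<Sum>a\<in>UNIV. \<Sum>b\<in>UNIV. delta (RV (xx a), RV (xx b), RV (W3 a b)) s) \<in> rel_span"
    unfolding RW3 by (intro rs_sum ballI T_zero3 finite vx)
  have "(\<lambda>s. \<Sum>a\<in>UNIV. \<Sum>b\<in>UNIV. (delta (RV (xx a), RV (xx b), RV (\<lambda>r. r$a *\<^sub>R G b r)) s
         + (delta (RV (xx a), RV (xx b), RV (\<lambda>r. r$b *\<^sub>R K a r)) s
         + delta (RV (xx a), RV (xx b), RV (W3 a b)) s))) \<in> rel_span"
    using rs_add[OF P1 rs_add[OF P2 P3]] by (simp add: sum.distrib)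
  with S1 show ?thesis by (rule eqv_rs)
qed

lemma sum4_swap: "(\<Sum>i\<in>A. \<Sum>j\<in>B. \<Sum>a\<in>C. \<Sum>b\<in>D. f i j a b) = (\<Sum>a\<in>C. \<Sum>b\<in>D. \<Sum>i\<in>A. \<Sum>j\<in>B. f i j a b)"
proof -
  have "(\<Sum>i\<in>A. \<Sum>j\<in>B. \<Sum>a\<in>C. \<Sum>b\<in>D. f i j a b) = (\<Sum>i\<in>A. \<Sum>a\<in>C. \<Sum>j\<in>B. \<Sum>b\<in>D. f i j a b)"
    by (rule sum.cong[OF refl], rule sum.swap)
  also have "\<dots> = (\<Sum>a\<in>C. \<Sum>i\<in>A. \<Sum>j\<in>B. \<Sum>b\<in>D. f i j a b)" by (rule sum.swap)
  also have "\<dots> = (\<Sum>a\<in>C. \<Sum>i\<in>A. \<Sum>b\<in>D. \<Sum>j\<in>B. f i j a b)"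
    by (rule sum.cong[OF refl], rule sum.cong[OF refl], rule sum.swap)
  also have "\<dots> = (\<Sum>a\<in>C. \<Sum>b\<in>D. \<Sum>i\<in>A. \<Sum>j\<in>B. f i j a b)"
    by (rule sum.cong[OF refl], rule sum.swap)
  finally show ?thesis .
qed

lemma proj: "tv q \<Longrightarrow> r \<in> S2 \<Longrightarrow> (\<Sum>\<alpha>\<in>UNIV. xx \<alpha> r $ a * q r $ \<alpha>) = q r $ a"
proof -
  assume "tv q" "r \<in> S2"
  then have "(\<Sum>\<alpha>\<in>UNIV. (q r $ \<alpha>) *\<^sub>R xx \<alpha> r) $ a = q r $ a" using decomp by simp
  then show ?thesis by (simp add: sum_component mult.commute)
qed

lemma bilin: "(\<Sum>\<alpha>\<in>A. \<Sum>\<beta>\<in>B. (P \<alpha> * Q \<beta>) *\<^sub>R ((f \<alpha> * g \<beta>) *\<^sub>R (v::real^3)))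
   = ((\<Sum>\<alpha>\<in>A. P \<alpha> * f \<alpha>) * (\<Sum>\<beta>\<in>B. Q \<beta> * g \<beta>)) *\<^sub>R v"
  by (simp add: sum_product scaleR_sum_left algebra_simps)

lemma Xf_RV: "Xf v = RV (\<lambda>r. v - (v \<bullet> r) *\<^sub>R r)" by (simp add: Xf_def RV_def)
lemma Yf_RV: "Yf v = RV (\<lambda>r. cross3 v r)" by (simp add: Yf_def RV_def)

lemma ident:
  fixes r :: "real^3"
  assumes "r \<bullet> r = 1"
  shows "(\<Sum>i\<in>UNIV. \<Sum>j\<in>UNIV. ((cross3 (cross3 (e i) (e j)) r $ a * cross3 (e j) r $ b) *\<^sub>R cross3 (e i) r
     - ((e j - (e j \<bullet> r) *\<^sub>R r) $ a * (cross3 (e i) (e j) - (cross3 (e i) (e j) \<bullet> r) *\<^sub>R r) $ b) *\<^sub>R cross3 (e i) r)) = 0"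
proof -
  have c: "r$1*r$1 + r$2*r$2 + r$3*r$3 = 1" using assms by (simp add: inner_vec_def sum_3)
  have h: "r$k * (r$1*r$1) + r$k * (r$2*r$2) + r$k*(r$3*r$3) = r$k" for k
    by (metis c distrib_left mult.right_neutral)
  have "a = 1 \<or> a = 2 \<or> a = 3" "b = 1 \<or> b = 2 \<or> b = 3" by (rule exhaust_3)+
  then show ?thesis
    apply (elim disjE)
    apply (simp_all add: vec_eq_iff forall_3 sum_3 cross3_def inner_vec_def axis_def algebra_simps)
    apply (safe)
    apply (use h[of 1] h[of 2] h[of 3] in \<open>simp add: algebra_simps\<close>)+
    done
qed

theorem lemma4p5p1:
  shows "psi \<in> rel_span"
proof -
  define q1 where "q1 i j = (\<lambda>r. cross3 (cross3 (e i) (e j)) r)" for i j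
  define q2 where "q2 j = (\<lambda>r. cross3 (e j) r)" for j
  define q3 where "q3 i = (\<lambda>r. cross3 (e i) r)" for i
  define p1 where "p1 j = (\<lambda>r. e j - (e j \<bullet> r) *\<^sub>R r)" for j
  define p2 where "p2 i j = (\<lambda>r. cross3 (e i) (e j) - (cross3 (e i) (e j) \<bullet> r) *\<^sub>R r)" for i j
  have tq: "tv (q1 i j)" "tv (q2 j)" "tv (q3 i)" "tv (p1 j)" "tv (p2 i j)" for i j
    unfolding q1_def q2_def q3_def p1_def p2_def by (rule tv_Y tv_X)+
  define U where "U i j a b = (\<lambda>r. (q1 i j r $ a * q2 j r $ b) *\<^sub>R q3 i r)" for i j a b
  define V where "V i j a b = (\<lambda>r. (p1 j r $ a * p2 i j r $ b) *\<^sub>R q3 i r)" for i j a b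
  define NV where "NV i j a b = (\<lambda>r. - V i j a b r)" for i j a b
  have tU: "tv (U i j a b)" for i j a b unfolding U_def by (intro tv_scale pm poly3_tvc tq)
  have tV: "tv (V i j a b)" for i j a b unfolding V_def by (intro tv_scale pm poly3_tvc tq)
  have tNV: "tv (NV i j a b)" for i j a b unfolding NV_def by (intro tv_neg tV)
  have vx: "vf_S2 (RV (xx a))" for a using vf_RV tv_xx by blast
  define D where "D W = (\<lambda>s. \<Sum>a\<in>UNIV. \<Sum>b\<in>UNIV. delta (RV (xx a), RV (xx b), RV (W a b)) s)" for W
  have psi_eq: "psi = (\<lambda>s. \<Sum>i\<in>UNIV. \<Sum>j\<in>UNIV. delta (RV (q1 i j), RV (q2 j), RV (q3 i)) s
                         - delta (RV (p1 j), RV (p2 i j), RV (q3 i)) s)"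
    by (simp add: psi_def Xf_RV Yf_RV q1_def q2_def q3_def p1_def p2_def)
  have "eqv psi (\<lambda>s. \<Sum>i\<in>UNIV. \<Sum>j\<in>UNIV. D (U i j) s - D (V i j) s)"
    unfolding psi_eq D_def U_def V_def
    by (intro eqv_sum ballI finite eqv_diff expand tq)
  also have "eqv \<dots> (\<lambda>s. \<Sum>i\<in>UNIV. \<Sum>j\<in>UNIV. D (U i j) s + D (NV i j) s)"
  proof (intro eqv_sum ballI finite)
    fix i j
    have "eqv (D (NV i j)) (\<lambda>s. \<Sum>a\<in>UNIV. \<Sum>b\<in>UNIV. - delta (RV (xx a), RV (xx b), RV (V i j a b)) s)"
      unfolding D_def NV_def by (intro eqv_sum ballI finite T_neg3 vx tV)
    moreover have "(\<lambda>s. - D (V i j) s) = (\<lambda>s. \<Sum>a\<in>UNIV. \<Sum>b\<in>UNIV. - delta (RV (xx a), RV (xx b), RV (V i j a b)) s)"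
      by (simp add: D_def sum_negf)
    ultimately have "eqv (\<lambda>s. - D (V i j) s) (D (NV i j))"
      using eqv_sym by metis
    then show "eqv (\<lambda>s. D (U i j) s - D (V i j) s) (\<lambda>s. D (U i j) s + D (NV i j) s)"
      using eqv_add[OF eqv_refl[of "D (U i j)"], of "\<lambda>s. - D (V i j) s" "D (NV i j)"] by simp
  qed
  also have "(\<lambda>s. \<Sum>i\<in>UNIV. \<Sum>j\<in>UNIV. D (U i j) s + D (NV i j) s)
     = (\<lambda>s. \<Sum>a\<in>UNIV. \<Sum>b\<in>UNIV. \<Sum>i\<in>UNIV. \<Sum>j\<in>UNIV.
           delta (RV (xx a), RV (xx b), RV (U i j a b)) s + delta (RV (xx a), RV (xx b), RV (NV i j a b)) s)"
    unfolding D_def by (rule ext, subst sum4_swap, simp only: sum.distrib)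
  also have "eqv \<dots> (D (\<lambda>a b r. \<Sum>i\<in>UNIV. \<Sum>j\<in>UNIV. U i j a b r + NV i j a b r))"
    unfolding D_def
  proof (intro eqv_sum ballI finite)
    fix a b :: 3
    have "eqv (\<lambda>s. \<Sum>i\<in>UNIV. \<Sum>j\<in>UNIV. delta (RV (xx a), RV (xx b), RV (U i j a b)) s + delta (RV (xx a), RV (xx b), RV (NV i j a b)) s)
       (\<lambda>s. \<Sum>i\<in>UNIV. \<Sum>j\<in>UNIV. delta (RV (xx a), RV (xx b), RV (\<lambda>r. U i j a b r + NV i j a b r)) s)"
      unfolding RV_add by (intro eqv_sum ballI finite, rule eqv_sym, intro T_add3 vx vf_RV tU tNV)
    also have "eqv \<dots> (\<lambda>s. \<Sum>i\<in>UNIV. delta (RV (xx a), RV (xx b), RV (\<lambda>r. \<Sum>j\<in>UNIV. U i j a b r + NV i j a b r)) s)"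
      by (intro eqv_sum ballI finite, rule eqv_sym, intro slot3_sum finite ballI vx tv_add tU tNV)
    also have "eqv \<dots> (delta (RV (xx a), RV (xx b), RV (\<lambda>r. \<Sum>i\<in>UNIV. \<Sum>j\<in>UNIV. U i j a b r + NV i j a b r)))"
      by (rule eqv_sym, intro slot3_sum finite ballI vx tv_sum tv_add tU tNV)
    finally show "eqv (\<lambda>s. \<Sum>i\<in>UNIV. \<Sum>j\<in>UNIV. delta (RV (xx a), RV (xx b), RV (U i j a b)) s + delta (RV (xx a), RV (xx b), RV (NV i j a b)) s)
       (delta (RV (xx a), RV (xx b), RV (\<lambda>r. \<Sum>i\<in>UNIV. \<Sum>j\<in>UNIV. U i j a b r + NV i j a b r)))" .
  qed
  finally have E: "eqv psi (D (\<lambda>a b r. \<Sum>i\<in>UNIV. \<Sum>j\<in>UNIV. U i j a b r + NV i j a b r))" .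
  have K: "D (\<lambda>a b r. \<Sum>i\<in>UNIV. \<Sum>j\<in>UNIV. U i j a b r + NV i j a b r) \<in> rel_span"
    unfolding D_def
  proof (rule kernel)
    fix a b
    show "tv (\<lambda>r. \<Sum>i\<in>UNIV. \<Sum>j\<in>UNIV. U i j a b r + NV i j a b r)"
      by (intro tv_sum finite ballI tv_add tU tNV)
  next
    fix r a b
    assume r: "r \<in> S2"
    have "(\<Sum>\<alpha>\<in>UNIV. \<Sum>\<beta>\<in>UNIV. (xx \<alpha> r $ a * xx \<beta> r $ b) *\<^sub>R (\<Sum>i\<in>UNIV. \<Sum>j\<in>UNIV. U i j \<alpha> \<beta> r + NV i j \<alpha> \<beta> r))
      = (\<Sum>i\<in>UNIV. \<Sum>j\<in>UNIV. \<Sum>\<alpha>\<in>UNIV. \<Sum>\<beta>\<in>UNIV. (xx \<alpha> r $ a * xx \<beta> r $ b) *\<^sub>R (U i j \<alpha> \<beta> r + NV i j \<alpha> \<beta> r))"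
      by (simp only: scaleR_sum_right, subst sum4_swap, rule refl)
    also have "\<dots> = (\<Sum>i\<in>UNIV. \<Sum>j\<in>UNIV. (q1 i j r $ a * q2 j r $ b) *\<^sub>R q3 i r - (p1 j r $ a * p2 i j r $ b) *\<^sub>R q3 i r)"
    proof (intro sum.cong refl)
      fix i j
      have "(\<Sum>\<alpha>\<in>UNIV. \<Sum>\<beta>\<in>UNIV. (xx \<alpha> r $ a * xx \<beta> r $ b) *\<^sub>R (U i j \<alpha> \<beta> r + NV i j \<alpha> \<beta> r))
         = (\<Sum>\<alpha>\<in>UNIV. \<Sum>\<beta>\<in>UNIV. (xx \<alpha> r $ a * xx \<beta> r $ b) *\<^sub>R ((q1 i j r $ \<alpha> * q2 j r $ \<beta>) *\<^sub>R q3 i r))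
         - (\<Sum>\<alpha>\<in>UNIV. \<Sum>\<beta>\<in>UNIV. (xx \<alpha> r $ a * xx \<beta> r $ b) *\<^sub>R ((p1 j r $ \<alpha> * p2 i j r $ \<beta>) *\<^sub>R q3 i r))"
        by (simp add: U_def NV_def V_def scaleR_right_diff_distrib sum_subtractf)
      also have "\<dots> = (q1 i j r $ a * q2 j r $ b) *\<^sub>R q3 i r - (p1 j r $ a * p2 i j r $ b) *\<^sub>R q3 i r"
        unfolding bilin using proj[OF tq(1) r] proj[OF tq(2) r] proj[OF tq(4) r] proj[OF tq(5) r]
        by simp
      finally show "(\<Sum>\<alpha>\<in>UNIV. \<Sum>\<beta>\<in>UNIV. (xx \<alpha> r $ a * xx \<beta> r $ b) *\<^sub>R (U i j \<alpha> \<beta> r + NV i j \<alpha> \<beta> r))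
         = (q1 i j r $ a * q2 j r $ b) *\<^sub>R q3 i r - (p1 j r $ a * p2 i j r $ b) *\<^sub>R q3 i r" .
    qed
    also have "\<dots> = 0"
      unfolding q1_def q2_def q3_def p1_def p2_def using ident[OF S2_norm[OF r]] by simp
    finally show "(\<Sum>\<alpha>\<in>UNIV. \<Sum>\<beta>\<in>UNIV. (xx \<alpha> r $ a * xx \<beta> r $ b) *\<^sub>R (\<Sum>i\<in>UNIV. \<Sum>j\<in>UNIV. U i j \<alpha> \<beta> r + NV i j \<alpha> \<beta> r)) = 0" .
  qed
  from E K show ?thesis by (rule eqv_rs)
qed

end
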